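(* Let $S$ be the graph obtained from nine pairwise vertex-disjoint copies of $J_3$ by identifying the copies of vertex $a$ into a single vertex $a$ and the copies of vertex $b$ into a single vertex $b$ (so the copies of the edge $ab$ become a single edge $ab$), all other vertices staying distinct. Let $H$ be a subgraph of $S$ with maximum degree at most three that contains no edge incident with $a$. Then $S-E(H)$ contains $K_4$ or a member of $\mathcal{J}$ as a subgraph.
   Context: $J_3$ is the graph with vertex set $\{a,b,c,d,e,f,g,h,i,j,k\}$ and edges $ab$; $ac,ad,ae,af,ag$; $bc,bd,be,bf,bg$; $cd,de,ef,fg$; $ha,hd,he$; $ia,ie,if$; $jb,jd,je$; $kb,ke,kf$. $J_1$ is the graph on $\{a,b,c,d,e\}$ with edges $\{ab,ac,bc,ae,be,cd,de,ad\}$, and $J_2$ is the graph on the same vertices with edges $\{ab,ac,bc,ae,be,cd,de,bd\}$. $\mathcal{J}$ is the class of graphs obtained by taking six pairwise vertex-disjoint graphs, each isomorphic to $J_1$ or $J_2$, and identifying all copies of $a$ into one vertex and all copies of $b$ into one vertex (other vertices distinct). *)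

theory Defs
  imports Main
begin

text \<open>Graphs are given by a vertex set and a set of edges, each edge a 2-element set of vertices.\<close>

datatype jv = Ja | Jb | Jc | Jd | Je | Jf | Jg | Jh | Ji | Jj | Jk

definition J3_edges :: "jv set set" where
  "J3_edges = {{Ja,Jb},
     {Ja,Jc},{Ja,Jd},{Ja,Je},{Ja,Jf},{Ja,Jg},
     {Jb,Jc},{Jb,Jd},{Jb,Je},{Jb,Jf},{Jb,Jg},
     {Jc,Jd},{Jd,Je},{Je,Jf},{Jf,Jg},
     {Jh,Ja},{Jh,Jd},{Jh,Je},
     {Ji,Ja},{Ji,Je},{Ji,Jf},
     {Jj,Jb},{Jj,Jd},{Jj,Je},
     {Jk,Jb},{Jk,Je},{Jk,Jf}}"

definition J1_edges :: "jv set set" where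
  "J1_edges = {{Ja,Jb},{Ja,Jc},{Jb,Jc},{Ja,Je},{Jb,Je},{Jc,Jd},{Jd,Je},{Ja,Jd}}"

definition J2_edges :: "jv set set" where
  "J2_edges = {{Ja,Jb},{Ja,Jc},{Jb,Jc},{Ja,Je},{Jb,Je},{Jc,Jd},{Jd,Je},{Jb,Jd}}"

text \<open>Vertices of graphs obtained by gluing copies (indexed by nat) along a and b.\<close>
datatype gv = GA | GB | GV nat jv

definition glue :: "nat \<Rightarrow> jv \<Rightarrow> gv" where
  "glue i x = (if x = Ja then GA else if x = Jb then GB else GV i x)"

definition S_verts :: "gv set" where
  "S_verts = {glue i x | i x. i < 9}"

definition S_edges :: "gv set set" where
  "S_edges = {glue i ` e | i e. i < 9 \<and> e \<in> J3_edges}"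

definition Jcls_verts :: "gv set" where
  "Jcls_verts = {glue i x | i x. i < 6 \<and> x \<in> {Ja,Jb,Jc,Jd,Je}}"

definition Jcls_edges :: "(nat \<Rightarrow> bool) \<Rightarrow> gv set set" where
  "Jcls_edges c = {glue i ` e | i e. i < 6 \<and> e \<in> (if c i then J1_edges else J2_edges)}"

definition contains_copy :: "'b set \<Rightarrow> 'b set set \<Rightarrow> 'a set \<Rightarrow> 'a set set \<Rightarrow> bool" where
  "contains_copy VG EG V E \<longleftrightarrow>
     (\<exists>f. inj_on f VG \<and> f ` VG \<subseteq> V \<and> (\<forall>e\<in>EG. f ` e \<in> E))"

definition contains_K4 :: "'a set \<Rightarrow> 'a set set \<Rightarrow> bool" where
  "contains_K4 V E \<longleftrightarrow> (\<exists>K \<subseteq> V. card K = 4 \<and> (\<forall>x\<in>K. \<forall>y\<in>K. x \<noteq> y \<longrightarrow> {x,y} \<in> E))"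

definition contains_J_member :: "'a set \<Rightarrow> 'a set set \<Rightarrow> bool" where
  "contains_J_member V E \<longleftrightarrow> (\<exists>c. contains_copy Jcls_verts (Jcls_edges c) V E)"

definition degree :: "'a set set \<Rightarrow> 'a \<Rightarrow> nat" where
  "degree E v = card {e \<in> E. v \<in> e}"

end

theory Submission imports Defs begin

definition patt :: "(jv set \<Rightarrow> bool) \<Rightarrow> (jv \<Rightarrow> jv) \<Rightarrow> bool \<Rightarrow> bool" where
  "patt rem P C \<longleftrightarrow> P Ja = Ja \<and> P Jb = Jb \<and> P Jc \<notin> {Ja,Jb} \<and> P Jd \<notin> {Ja,Jb} \<and> P Je \<notin> {Ja,Jb}
     \<and> P Jc \<noteq> P Jd \<and> P Jc \<noteq> P Je \<and> P Jd \<noteq> P Je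
     \<and> (\<forall>e0 \<in> (if C then J1_edges else J2_edges). P ` e0 \<in> J3_edges \<and> \<not> rem (P ` e0))"

lemma local_copy:
  fixes rem :: "jv set \<Rightarrow> bool"
  assumes a: "\<And>x. \<not> rem {Ja,x}" and b: "\<And>x. x \<noteq> Ja \<Longrightarrow> x \<noteq> Jb \<Longrightarrow> \<not> rem {Jb,x}"
    and d: "\<not> (rem {Jc,Jd} \<and> rem {Jd,Je} \<and> rem {Jh,Jd} \<and> rem {Jj,Jd})"
    and e1: "\<not> (rem {Jd,Je} \<and> rem {Je,Jf} \<and> rem {Ji,Je} \<and> rem {Jh,Je})"
    and e2: "\<not> (rem {Jd,Je} \<and> rem {Je,Jf} \<and> rem {Ji,Je} \<and> rem {Jj,Je})"
    and e3: "\<not> (rem {Jd,Je} \<and> rem {Je,Jf} \<and> rem {Jk,Je} \<and> rem {Jh,Je})"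
    and e4: "\<not> (rem {Jd,Je} \<and> rem {Je,Jf} \<and> rem {Jk,Je} \<and> rem {Jj,Je})"
    and f: "\<not> (rem {Je,Jf} \<and> rem {Jf,Jg} \<and> rem {Ji,Jf} \<and> rem {Jk,Jf})"
    and path: "rem {Jc,Jd}" "rem {Jd,Je}" "rem {Je,Jf}" "rem {Jf,Jg}"
  shows "\<exists>P C. patt rem P C"
proof -
  have a': "\<And>x. \<not> rem {x,Ja}" using a by (metis insert_commute)
  have b': "\<And>x. x \<noteq> Ja \<Longrightarrow> x \<noteq> Jb \<Longrightarrow> \<not> rem {x,Jb}" using b by (metis insert_commute)
  have c1: "\<not> rem {Jh,Jd} \<Longrightarrow> \<not> rem {Jh,Je} \<Longrightarrow> ?thesis"
  proof -
    assume h: "\<not> rem {Jh,Jd}" "\<not> rem {Jh,Je}"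
    show ?thesis
      apply (rule exI[of _ "\<lambda>x. case x of Jc \<Rightarrow> Jd | Jd \<Rightarrow> Jh | Je \<Rightarrow> Je | _ \<Rightarrow> x"])
      apply (rule exI[of _ True])
      using a a' b b' h unfolding patt_def J1_edges_def J3_edges_def
      apply (simp add: insert_commute) using a b by simp
  qed
  have c2: "\<not> rem {Jj,Jd} \<Longrightarrow> \<not> rem {Jj,Je} \<Longrightarrow> ?thesis"
  proof -
    assume h: "\<not> rem {Jj,Jd}" "\<not> rem {Jj,Je}"
    show ?thesis
      apply (rule exI[of _ "\<lambda>x. case x of Jc \<Rightarrow> Jd | Jd \<Rightarrow> Jj | Je \<Rightarrow> Je | _ \<Rightarrow> x"])
      apply (rule exI[of _ False])
      using a a' b b' h unfolding patt_def J2_edges_def J3_edges_def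
      apply (simp add: insert_commute) using a b by simp
  qed
  have c3: "\<not> rem {Ji,Je} \<Longrightarrow> \<not> rem {Ji,Jf} \<Longrightarrow> ?thesis"
  proof -
    assume h: "\<not> rem {Ji,Je}" "\<not> rem {Ji,Jf}"
    show ?thesis
      apply (rule exI[of _ "\<lambda>x. case x of Jc \<Rightarrow> Je | Jd \<Rightarrow> Ji | Je \<Rightarrow> Jf | _ \<Rightarrow> x"])
      apply (rule exI[of _ True])
      using a a' b b' h unfolding patt_def J1_edges_def J3_edges_def
      apply (simp add: insert_commute) using a b by simp
  qed
  have c4: "\<not> rem {Jk,Je} \<Longrightarrow> \<not> rem {Jk,Jf} \<Longrightarrow> ?thesis"
  proof -
    assume h: "\<not> rem {Jk,Je}" "\<not> rem {Jk,Jf}"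
    show ?thesis
      apply (rule exI[of _ "\<lambda>x. case x of Jc \<Rightarrow> Je | Jd \<Rightarrow> Jk | Je \<Rightarrow> Jf | _ \<Rightarrow> x"])
      apply (rule exI[of _ False])
      using a a' b b' h unfolding patt_def J2_edges_def J3_edges_def
      apply (simp add: insert_commute) using a b by simp
  qed
  show ?thesis using c1 c2 c3 c4 d e1 e2 e3 e4 f path by blast
qed


lemma glue_simps[simp]: "glue i Ja = GA" "glue i Jb = GB"
  "x \<noteq> Ja \<Longrightarrow> x \<noteq> Jb \<Longrightarrow> glue i x = GV i x"
  by (auto simp: glue_def)

lemma glue_other: "glue i Jc = GV i Jc" "glue i Jd = GV i Jd" "glue i Je = GV i Je"
  "glue i Jf = GV i Jf" "glue i Jg = GV i Jg" "glue i Jh = GV i Jh" "glue i Ji = GV i Ji"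
  "glue i Jj = GV i Jj" "glue i Jk = GV i Jk"
  by (auto simp: glue_def)

lemma finite_J3: "finite J3_edges" by (simp add: J3_edges_def)

lemma finite_S_edges: "finite S_edges"
proof -
  have "S_edges = (\<lambda>(i,e). glue i ` e) ` ({..<9} \<times> J3_edges)"
    unfolding S_edges_def by auto
  then show ?thesis using finite_J3 by (metis finite_cartesian_product finite_imageI finite_lessThan)
qed

lemma S_edge_in: "i < 9 \<Longrightarrow> e \<in> J3_edges \<Longrightarrow> glue i ` e \<in> S_edges"
  unfolding S_edges_def by blast

lemma S_vert_in: "i < 9 \<Longrightarrow> glue i x \<in> S_verts"
  unfolding S_verts_def by blast

lemma deg4:
  assumes "finite HE" "\<forall>v\<in>HV. degree HE v \<le> 3" "\<forall>e\<in>HE. e \<subseteq> HV"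
    and "e1 \<in> HE" "e2 \<in> HE" "e3 \<in> HE" "e4 \<in> HE"
    and "v \<in> e1" "v \<in> e2" "v \<in> e3" "v \<in> e4"
    and "e1 \<noteq> e2" "e1 \<noteq> e3" "e1 \<noteq> e4" "e2 \<noteq> e3" "e2 \<noteq> e4" "e3 \<noteq> e4"
  shows False
proof -
  have "v \<in> HV" using assms by blast
  have "card {e1,e2,e3,e4} \<le> card {e \<in> HE. v \<in> e}"
    by (rule card_mono) (use assms in auto)
  moreover have "card {e1,e2,e3,e4} = 4" using assms by simp
  ultimately have "degree HE v \<ge> 4" unfolding degree_def by simp
  then show False using assms(2) \<open>v \<in> HV\<close> by fastforce
qed

lemma k4:
  assumes "i < 9" "\<forall>e\<in>HE. GA \<notin> e"
    and "x \<noteq> Ja" "x \<noteq> Jb" "y \<noteq> Ja" "y \<noteq> Jb" "x \<noteq> y"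
    and "{Ja,x} \<in> J3_edges" "{Ja,y} \<in> J3_edges" "{Jb,x} \<in> J3_edges" "{Jb,y} \<in> J3_edges"
    "{x,y} \<in> J3_edges"
    and "glue i ` {Jb,x} \<notin> HE" "glue i ` {Jb,y} \<notin> HE" "glue i ` {x,y} \<notin> HE"
  shows "contains_K4 S_verts (S_edges - HE)"
proof -
  let ?E = "S_edges - HE"
  have e1: "{GA,GB} \<in> ?E" using S_edge_in[OF assms(1), of "{Ja,Jb}"] assms(2)
    by (auto simp: J3_edges_def)
  have e2: "{GA,GV i x} \<in> ?E" using S_edge_in[OF assms(1) assms(8)] assms by auto
  have e3: "{GA,GV i y} \<in> ?E" using S_edge_in[OF assms(1) assms(9)] assms by auto
  have e4: "{GB,GV i x} \<in> ?E" using S_edge_in[OF assms(1) assms(10)] assms by auto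
  have e5: "{GB,GV i y} \<in> ?E" using S_edge_in[OF assms(1) assms(11)] assms by auto
  have e6: "{GV i x,GV i y} \<in> ?E" using S_edge_in[OF assms(1) assms(12)] assms by auto
  have sym: "\<And>u v. {u,v} \<in> ?E \<Longrightarrow> {v,u} \<in> ?E" by (metis insert_commute)
  show ?thesis unfolding contains_K4_def
    apply (rule exI[of _ "{GA,GB,GV i x,GV i y}"])
    using e1 e2 e3 e4 e5 e6 sym[OF e1] sym[OF e2] sym[OF e3] sym[OF e4] sym[OF e5] sym[OF e6]
      assms S_vert_in[OF assms(1), of Ja] S_vert_in[OF assms(1), of Jb]
      S_vert_in[OF assms(1), of x] S_vert_in[OF assms(1), of y]
    by auto
qed

theorem corollary4:
  fixes HV :: "gv set" and HE :: "gv set set"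
  assumes "HV \<subseteq> S_verts" and "HE \<subseteq> S_edges" and "\<forall>e\<in>HE. e \<subseteq> HV"
    and "\<forall>v\<in>HV. degree HE v \<le> 3"
    and "\<forall>e\<in>HE. GA \<notin> e"
  shows "contains_K4 S_verts (S_edges - HE) \<or> contains_J_member S_verts (S_edges - HE)"
proof -
  have finHE: "finite HE" using assms(2) finite_S_edges finite_subset by blast
  define bad where "bad i \<longleftrightarrow> (\<exists>x. x \<noteq> Ja \<and> x \<noteq> Jb \<and> glue i ` {Jb,x} \<in> HE)" for i
  define B where "B = {i. i < 9 \<and> bad i}"
  define G where "G = {i. i < 9 \<and> \<not> bad i}"
  have cardB: "card B \<le> 3"
  proof (cases "B = {}")
    case True then show ?thesis by simp
  next
    case False
    then obtain i0 x0 where "x0 \<noteq> Ja" "x0 \<noteq> Jb" "glue i0 ` {Jb,x0} \<in> HE"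
      unfolding B_def bad_def by blast
    then have GBin: "GB \<in> HV" using assms(3) by fastforce
    define h where "h i = glue i ` {Jb, SOME x. x \<noteq> Ja \<and> x \<noteq> Jb \<and> glue i ` {Jb,x} \<in> HE}" for i
    have hin: "h i \<in> HE \<and> h i = {GB, GV i (SOME x. x \<noteq> Ja \<and> x \<noteq> Jb \<and> glue i ` {Jb,x} \<in> HE)}"
      if "i \<in> B" for i
    proof -
      from that obtain x where "x \<noteq> Ja \<and> x \<noteq> Jb \<and> glue i ` {Jb,x} \<in> HE"
        unfolding B_def bad_def by blast
      then have s: "(\<lambda>x. x \<noteq> Ja \<and> x \<noteq> Jb \<and> glue i ` {Jb,x} \<in> HE) (SOME x. x \<noteq> Ja \<and> x \<noteq> Jb \<and> glue i ` {Jb,x} \<in> HE)"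
        by (rule someI)
      define y where "y = (SOME x. x \<noteq> Ja \<and> x \<noteq> Jb \<and> glue i ` {Jb,x} \<in> HE)"
      have y: "y \<noteq> Ja" "y \<noteq> Jb" "glue i ` {Jb,y} \<in> HE" using s unfolding y_def by auto
      have "glue i ` {Jb,y} = {GB, GV i y}" using y by simp
      then show ?thesis unfolding h_def using y y_def by simp
    qed
    have "inj_on h B"
    proof
      fix i j assume "i \<in> B" "j \<in> B" "h i = h j"
      then show "i = j" using hin[of i] hin[of j] by (auto simp: doubleton_eq_iff)
    qed
    moreover have "h ` B \<subseteq> {e \<in> HE. GB \<in> e}" using hin by (metis (no_types, lifting) image_subsetI insertI1 mem_Collect_eq)
    ultimately have "card B \<le> card {e \<in> HE. GB \<in> e}"
      using card_inj_on_le finHE by fastforce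
    then show ?thesis using assms(4) GBin unfolding degree_def by fastforce
  qed
  have "{..<9::nat} = B \<union> G" "B \<inter> G = {}" unfolding B_def G_def by auto
  then have "card B + card G = 9"
    by (metis card_Un_disjoint card_lessThan finite_Un finite_lessThan)
  then have cardG: "card G \<ge> 6" using cardB by simp
  show ?thesis
  proof (cases "contains_K4 S_verts (S_edges - HE)")
    case True then show ?thesis by simp
  next
    case noK4: False
    have pat: "\<exists>P C. patt (\<lambda>e0. glue i ` e0 \<in> HE) P C" if iG: "i \<in> G" for i
    proof -
      have i9: "i < 9" and nb: "\<not> bad i" using iG unfolding G_def by auto
      have dd: "\<And>e1 e2 e3 e4 v. glue i ` e1 \<in> HE \<Longrightarrow> glue i ` e2 \<in> HE \<Longrightarrow> glue i ` e3 \<in> HE \<Longrightarrow> glue i ` e4 \<in> HE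
         \<Longrightarrow> v \<in> glue i ` e1 \<Longrightarrow> v \<in> glue i ` e2 \<Longrightarrow> v \<in> glue i ` e3 \<Longrightarrow> v \<in> glue i ` e4
         \<Longrightarrow> glue i ` e1 \<noteq> glue i ` e2 \<Longrightarrow> glue i ` e1 \<noteq> glue i ` e3 \<Longrightarrow> glue i ` e1 \<noteq> glue i ` e4
         \<Longrightarrow> glue i ` e2 \<noteq> glue i ` e3 \<Longrightarrow> glue i ` e2 \<noteq> glue i ` e4 \<Longrightarrow> glue i ` e3 \<noteq> glue i ` e4 \<Longrightarrow> False"
        using deg4[OF finHE assms(4) assms(3)] by blast
      show ?thesis
      proof (rule local_copy)
        show "\<And>x. glue i ` {Ja,x} \<notin> HE" using assms(5) by auto
        show "\<And>x. x \<noteq> Ja \<Longrightarrow> x \<noteq> Jb \<Longrightarrow> glue i ` {Jb,x} \<notin> HE" using nb bad_def by blast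
        show "\<not> (glue i ` {Jc,Jd} \<in> HE \<and> glue i ` {Jd,Je} \<in> HE \<and> glue i ` {Jh,Jd} \<in> HE \<and> glue i ` {Jj,Jd} \<in> HE)"
          using dd[of "{Jc,Jd}" "{Jd,Je}" "{Jh,Jd}" "{Jj,Jd}" "GV i Jd"] by (auto simp: glue_other)
        show "\<not> (glue i ` {Jd,Je} \<in> HE \<and> glue i ` {Je,Jf} \<in> HE \<and> glue i ` {Ji,Je} \<in> HE \<and> glue i ` {Jh,Je} \<in> HE)"
          using dd[of "{Jd,Je}" "{Je,Jf}" "{Ji,Je}" "{Jh,Je}" "GV i Je"] by (auto simp: glue_other)
        show "\<not> (glue i ` {Jd,Je} \<in> HE \<and> glue i ` {Je,Jf} \<in> HE \<and> glue i ` {Ji,Je} \<in> HE \<and> glue i ` {Jj,Je} \<in> HE)"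
          using dd[of "{Jd,Je}" "{Je,Jf}" "{Ji,Je}" "{Jj,Je}" "GV i Je"] by (auto simp: glue_other)
        show "\<not> (glue i ` {Jd,Je} \<in> HE \<and> glue i ` {Je,Jf} \<in> HE \<and> glue i ` {Jk,Je} \<in> HE \<and> glue i ` {Jh,Je} \<in> HE)"
          using dd[of "{Jd,Je}" "{Je,Jf}" "{Jk,Je}" "{Jh,Je}" "GV i Je"] by (auto simp: glue_other)
        show "\<not> (glue i ` {Jd,Je} \<in> HE \<and> glue i ` {Je,Jf} \<in> HE \<and> glue i ` {Jk,Je} \<in> HE \<and> glue i ` {Jj,Je} \<in> HE)"
          using dd[of "{Jd,Je}" "{Je,Jf}" "{Jk,Je}" "{Jj,Je}" "GV i Je"] by (auto simp: glue_other)
        show "\<not> (glue i ` {Je,Jf} \<in> HE \<and> glue i ` {Jf,Jg} \<in> HE \<and> glue i ` {Ji,Jf} \<in> HE \<and> glue i ` {Jk,Jf} \<in> HE)"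
          using dd[of "{Je,Jf}" "{Jf,Jg}" "{Ji,Jf}" "{Jk,Jf}" "GV i Jf"] by (auto simp: glue_other)
        have nbx: "\<And>x. x \<noteq> Ja \<Longrightarrow> x \<noteq> Jb \<Longrightarrow> glue i ` {Jb,x} \<notin> HE" using nb bad_def by blast
        show "glue i ` {Jc,Jd} \<in> HE"
          using noK4 k4[OF i9 assms(5), of Jc Jd] nbx[of Jc] nbx[of Jd] by (auto simp: J3_edges_def)
        show "glue i ` {Jd,Je} \<in> HE"
          using noK4 k4[OF i9 assms(5), of Jd Je] nbx[of Jd] nbx[of Je] by (auto simp: J3_edges_def)
        show "glue i ` {Je,Jf} \<in> HE"
          using noK4 k4[OF i9 assms(5), of Je Jf] nbx[of Je] nbx[of Jf] by (auto simp: J3_edges_def)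
        show "glue i ` {Jf,Jg} \<in> HE"
          using noK4 k4[OF i9 assms(5), of Jf Jg] nbx[of Jf] nbx[of Jg] by (auto simp: J3_edges_def)
      qed
    qed
    then have "\<forall>i\<in>G. \<exists>PC. patt (\<lambda>e0. glue i ` e0 \<in> HE) (fst PC) (snd PC)" by auto
    then obtain PC where PC: "\<forall>i\<in>G. patt (\<lambda>e0. glue i ` e0 \<in> HE) (fst (PC i)) (snd (PC i))"
      by metis
    define PP where "PP i = fst (PC i)" for i
    define CC where "CC i = snd (PC i)" for i
    have finG: "finite G" unfolding G_def by simp
    obtain g where g: "g ` {..<6::nat} \<subseteq> G" "inj_on g {..<6}"
      using card_le_inj[of "{..<6::nat}" G] finG cardG by auto
    have gk: "\<And>k. k < 6 \<Longrightarrow> g k < 9 \<and> patt (\<lambda>e0. glue (g k) ` e0 \<in> HE) (PP (g k)) (CC (g k))"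
      using g(1) PC unfolding PP_def CC_def G_def by auto
    define c where "c k = CC (g k)" for k
    define f where "f v = (case v of GA \<Rightarrow> GA | GB \<Rightarrow> GB | GV k x \<Rightarrow> glue (g k) (PP (g k) x))" for v
    have fglue: "f (glue k x) = glue (g k) (PP (g k) x)" if "k < 6" for k x
      using gk[OF that] unfolding patt_def f_def glue_def by auto
    have "contains_copy Jcls_verts (Jcls_edges c) S_verts (S_edges - HE)"
      unfolding contains_copy_def
    proof (intro exI conjI)
      show "inj_on f Jcls_verts"
      proof
        fix u v assume "u \<in> Jcls_verts" "v \<in> Jcls_verts" and fuv: "f u = f v"
        then obtain k x k' x' where u: "u = glue k x" "k < 6" "x \<in> {Ja,Jb,Jc,Jd,Je}"
          and v: "v = glue k' x'" "k' < 6" "x' \<in> {Ja,Jb,Jc,Jd,Je}"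
          unfolding Jcls_verts_def by blast
        have p1: "patt (\<lambda>e0. glue (g k) ` e0 \<in> HE) (PP (g k)) (CC (g k))" using gk u(2) by blast
        have p2: "patt (\<lambda>e0. glue (g k') ` e0 \<in> HE) (PP (g k')) (CC (g k'))" using gk v(2) by blast
        have eq: "glue (g k) (PP (g k) x) = glue (g k') (PP (g k') x')"
          using fuv fglue u v by simp
        have geq: "g k = g k' \<Longrightarrow> k = k'" using g(2) u(2) v(2) by (auto dest: inj_onD)
        show "u = v" using eq u v p1 p2 geq unfolding patt_def glue_def
          by (auto split: if_splits)
      qed
      show "f ` Jcls_verts \<subseteq> S_verts"
      proof
        fix w assume "w \<in> f ` Jcls_verts"
        then obtain k x where "w = f (glue k x)" "k < 6" unfolding Jcls_verts_def by blast
        then show "w \<in> S_verts" using fglue gk S_vert_in by metis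
      qed
      show "\<forall>e\<in>Jcls_edges c. f ` e \<in> S_edges - HE"
      proof
        fix e assume "e \<in> Jcls_edges c"
        then obtain k e0 where e: "e = glue k ` e0" "k < 6" "e0 \<in> (if c k then J1_edges else J2_edges)"
          unfolding Jcls_edges_def by blast
        have "f ` e = glue (g k) ` (PP (g k) ` e0)" using e fglue by (auto simp: image_image)
        moreover have "PP (g k) ` e0 \<in> J3_edges \<and> glue (g k) ` (PP (g k) ` e0) \<notin> HE"
          using gk[OF e(2)] e(3) unfolding patt_def c_def by blast
        ultimately show "f ` e \<in> S_edges - HE" using S_edge_in gk[OF e(2)] by auto
      qed
    qed
    then show ?thesis unfolding contains_J_member_def by blast
  qed
qed

end
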